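(* Let $p$ be holomorphic and not constant on a neighborhood $\mathcal{B}$ of $z_0\in\mathbb{C}$, with $p(z)=p(z_0)-p_0(z-z_0)^\mu(1-\phi(z))$ on $\mathcal{B}$, $\mu\in\mathbb{Z}_{\ge1}$, $p_0\neq0$, $\phi$ holomorphic, $\phi(z_0)=0$. Let $\omega_0=\arg p_0$, $\theta_\ell=-\omega_0/\mu+2\pi\ell/\mu$, and let $R_p>0$ and the functions $f_\ell$ ($\ell\in\mathbb{Z}$) be as described in the context. Then $$f_{2\ell-1}(r)<\theta_\ell<f_{2\ell}(r)\quad\text{for all } r\in[0,R_p],\ \ell\in\mathbb{Z},$$ and $$\mathrm{Re}\big(p(z_0+re^{i\theta_\ell})-p(z_0)\big)<0\quad\text{for all } r\in(0,R_p],\ \ell\in\mathbb{Z}.$$ More generally, for every $r\in(0,R_p]$, one has $\mathrm{Re}\big(p(z_0+re^{i\theta})-p(z_0)\big)<0$ if and only if $f_{2\ell-1}(r)<\theta<f_{2\ell}(r)$ for some $\ell\in\mathbb{Z}$.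
   Context: $R_p>0$ is such that the closed disk of radius $R_p$ about $z_0$ lies in $\mathcal{B}$, and with $\delta_\ell=-\omega_0/\mu+\pi(\ell+1/2)/\mu$: all solutions $(r,\theta)$, $r\in[0,R_p]$, of $\mathrm{Re}\big(p(z_0+re^{i\theta})-p(z_0)\big)/r^\mu=0$ (at $r=0$ meaning $-|p_0|\cos(\omega_0+\mu\theta)=0$) are exactly the pairs $(r,f_\ell(r))$, $\ell\in\mathbb{Z}$, where each $f_\ell$ is differentiable on an interval containing $[0,R_p]$, $f_\ell(0)=\delta_\ell$ and $|f_\ell(r)-\delta_\ell|\le\pi/(4\mu)$ for $r\in[0,R_p]$. $\arg$ takes values in $(-\pi,\pi]$. *)

theory Defs
  imports "HOL-Complex_Analysis.Complex_Analysis"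
begin

definition rescaled_re ::
  "(complex \<Rightarrow> complex) \<Rightarrow> complex \<Rightarrow> complex \<Rightarrow> nat \<Rightarrow> real \<Rightarrow> real \<Rightarrow> real" where
  "rescaled_re p z0 p0 \<mu> r \<theta> =
     (if r = 0 then - cmod p0 * cos (Arg p0 + real \<mu> * \<theta>)
      else Re (p (z0 + complex_of_real r * exp (\<i> * complex_of_real \<theta>)) - p z0) / r ^ \<mu>)"

end

theory Submission
  imports Defs
begin

lemma sign_const_lemma:
  fixes h :: "real \<Rightarrow> real"
  assumes "continuous_on {x..y} h" "x \<le> y" "\<forall>s\<in>{x..y}. h s \<noteq> 0"
  shows "h x < 0 \<longleftrightarrow> h y < 0"
proof
  assume hx: "h x < 0"
  show "h y < 0"
  proof (rule ccontr)
    assume "\<not> h y < 0"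
    then have "0 \<le> h y" by simp
    from IVT'[of h x 0 y, OF _ this assms(2) assms(1)] hx obtain s where "x \<le> s" "s \<le> y" "h s = 0" by auto
    with assms(3) show False by auto
  qed
next
  assume hy: "h y < 0"
  show "h x < 0"
  proof (rule ccontr)
    assume "\<not> h x < 0"
    then have "0 \<le> h x" by simp
    from IVT2'[of h y 0 x, OF _ this assms(2) assms(1)] hy obtain s where "x \<le> s" "s \<le> y" "h s = 0" by auto
    with assms(3) show False by auto
  qed
qed

theorem corollary2p2:
  fixes p \<phi> :: "complex \<Rightarrow> complex" and B :: "complex set" and z0 p0 :: complex
    and \<mu> :: nat and R :: real and f :: "int \<Rightarrow> real \<Rightarrow> real"
  assumes B: "open B" "z0 \<in> B"
    and hol: "p holomorphic_on B" and nonconst: "\<not> (\<exists>c. \<forall>z\<in>B. p z = c)"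
    and mu: "\<mu> \<ge> 1" and p0: "p0 \<noteq> 0"
    and phi: "\<phi> holomorphic_on B" "\<phi> z0 = 0"
    and rep: "\<forall>z\<in>B. p z = p z0 - p0 * (z - z0) ^ \<mu> * (1 - \<phi> z)"
    and R: "R > 0" "cball z0 R \<subseteq> B"
    and f_diff: "\<forall>l::int. \<exists>I::real set. is_interval I \<and> {0..R} \<subseteq> I \<and> f l differentiable_on I"
    and f_0: "\<forall>l::int. f l 0 = - Arg p0 / real \<mu> + pi * (real_of_int l + 1/2) / real \<mu>"
    and f_bound: "\<forall>l::int. \<forall>r\<in>{0..R}.
        \<bar>f l r - (- Arg p0 / real \<mu> + pi * (real_of_int l + 1/2) / real \<mu>)\<bar> \<le> pi / (4 * real \<mu>)"
    and f_zeros: "\<forall>r\<in>{0..R}. \<forall>\<theta>::real.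
        rescaled_re p z0 p0 \<mu> r \<theta> = 0 \<longleftrightarrow> (\<exists>l::int. \<theta> = f l r)"
  shows "(\<forall>l::int. \<forall>r\<in>{0..R}.
            f (2*l - 1) r < - Arg p0 / real \<mu> + 2 * pi * real_of_int l / real \<mu> \<and>
            - Arg p0 / real \<mu> + 2 * pi * real_of_int l / real \<mu> < f (2*l) r)
       \<and> (\<forall>l::int. \<forall>r\<in>{0<..R}.
            Re (p (z0 + complex_of_real r * exp (\<i> * complex_of_real
                  (- Arg p0 / real \<mu> + 2 * pi * real_of_int l / real \<mu>))) - p z0) < 0)
       \<and> (\<forall>r\<in>{0<..R}. \<forall>\<theta>::real.
            Re (p (z0 + complex_of_real r * exp (\<i> * complex_of_real \<theta>)) - p z0) < 0
            \<longleftrightarrow> (\<exists>l::int. f (2*l - 1) r < \<theta> \<and> \<theta> < f (2*l) r))"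
proof -
  define a where "a = - Arg p0 / real \<mu>"
  define c where "c = pi / real \<mu>"
  define t where "t = (\<lambda>k::int. a + c * real_of_int k)"
  define g where "g = rescaled_re p z0 p0 \<mu>"
  define H where "H = (\<lambda>r \<theta>. - Re (p0 * exp (\<i> * complex_of_real \<theta>) ^ \<mu> *
        (1 - \<phi> (z0 + complex_of_real r * exp (\<i> * complex_of_real \<theta>)))))"
  have mupos: "real \<mu> > 0" using mu by simp
  have cpos: "c > 0" using mupos by (simp add: c_def)
  have fb: "\<bar>f l r - (a + c * (real_of_int l + 1/2))\<bar> \<le> c / 4" if "r \<in> {0..R}" for l r
  proof -
    have e1: "- Arg p0 / real \<mu> + pi * (real_of_int l + 1/2) / real \<mu> = a + c*(real_of_int l+1/2)"
      by (simp add: a_def c_def)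
    have e2: "pi/(4*real \<mu>) = c/4" by (simp add: c_def)
    have "\<bar>f l r - (- Arg p0 / real \<mu> + pi * (real_of_int l + 1/2) / real \<mu>)\<bar> \<le> pi / (4 * real \<mu>)"
      using f_bound that by blast
    then show ?thesis by (simp only: e1 e2)
  qed
  have fu: "f l r \<le> a + c * real_of_int l + 3*c/4" if "r \<in> {0..R}" for l r
    using abs_le_D1[OF fb[OF that, of l]] by (simp add: algebra_simps)
  have fl: "f l r \<ge> a + c * real_of_int l + c/4" if "r \<in> {0..R}" for l r
    using abs_le_D2[OF fb[OF that, of l]] by (simp add: algebra_simps)
  have above: "f m r < t k" if "r \<in> {0..R}" "m < k" for m k r
  proof -
    have "real_of_int k \<ge> real_of_int m + 1" using that by simp
    then have "c * real_of_int k \<ge> c * (real_of_int m + 1)" using cpos by (intro mult_left_mono) auto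
    then have "c * real_of_int k \<ge> c * real_of_int m + c" by (simp only: distrib_left mult_1_right)
    then show ?thesis using fu[OF that(1), of m] cpos unfolding t_def by linarith
  qed
  have below: "t k < f m r" if "r \<in> {0..R}" "k \<le> m" for m k r
  proof -
    have "real_of_int k \<le> real_of_int m" using that by simp
    then have "c * real_of_int k \<le> c * real_of_int m" using cpos by (intro mult_left_mono) auto
    then show ?thesis using fl[OF that(1), of m] cpos unfolding t_def by linarith
  qed
  have mono: "f m r < f n r" if "r \<in> {0..R}" "m < n" for m n r
    using above[OF that] below[OF that(1), of n n] by simp
  have mono_rev: "m < n" if "r \<in> {0..R}" "f m r < f n r" for m n r
  proof (rule ccontr)
    assume "\<not> m < n"
    then have "n = m \<or> n < m" by auto
    then show False using mono[OF that(1), of n m] that(2) by auto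
  qed
  have inB: "z0 + complex_of_real r * exp (\<i> * complex_of_real \<theta>) \<in> B" if "r \<in> {0..R}" for r \<theta>
  proof -
    have "dist z0 (z0 + complex_of_real r * exp (\<i> * complex_of_real \<theta>)) = r"
      using that by (simp add: dist_norm norm_mult)
    then show ?thesis using R(2) that by (auto simp: subset_iff)
  qed
  have gH: "g r \<theta> = H r \<theta>" if "r \<in> {0..R}" for r \<theta>
  proof (cases "r = 0")
    case True
    have "p0 * exp (\<i> * complex_of_real \<theta>) ^ \<mu> = complex_of_real (cmod p0) * cis (Arg p0 + real \<mu> * \<theta>)"
    proof -
      have "p0 * exp (\<i> * complex_of_real \<theta>) ^ \<mu> = rcis (cmod p0) (Arg p0) * cis \<theta> ^ \<mu>"
        by (simp add: rcis_cmod_Arg cis_conv_exp)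
      also have "\<dots> = complex_of_real (cmod p0) * cis (Arg p0 + real \<mu> * \<theta>)"
        by (subst Complex.DeMoivre) (simp only: rcis_def mult.assoc cis_mult)
      finally show ?thesis .
    qed
    then have eq: "p0 * exp (\<i> * complex_of_real \<theta>) ^ \<mu> * (1 - \<phi> (z0 + complex_of_real 0 * exp (\<i> * complex_of_real \<theta>)))
       = complex_of_real (cmod p0) * cis (Arg p0 + real \<mu> * \<theta>)" using phi(2) by simp
    have "H r \<theta> = - Re (complex_of_real (cmod p0) * cis (Arg p0 + real \<mu> * \<theta>))"
      unfolding H_def True by (simp only: eq)
    then show ?thesis using True
      by (simp add: g_def rescaled_re_def)
  next
    case False
    then have rpos: "r > 0" using that by auto
    let ?e = "exp (\<i> * complex_of_real \<theta>)"
    let ?z = "z0 + complex_of_real r * ?e"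
    have "p ?z - p z0 = - (complex_of_real (r ^ \<mu>) * (p0 * ?e ^ \<mu> * (1 - \<phi> ?z)))"
    proof -
      have pz: "p ?z = p z0 - p0 * (?z - z0) ^ \<mu> * (1 - \<phi> ?z)" using rep inB[OF that, of \<theta>] by blast
      have "(?z - z0) ^ \<mu> = complex_of_real (r ^ \<mu>) * ?e ^ \<mu>" by (simp add: power_mult_distrib)
      with pz show ?thesis by (simp add: algebra_simps)
    qed
    then have "Re (p ?z - p z0) = - (r ^ \<mu> * Re (p0 * ?e ^ \<mu> * (1 - \<phi> ?z)))"
      by simp
    then show ?thesis using False rpos by (simp add: g_def H_def rescaled_re_def)
  qed
  have cphi: "continuous_on B \<phi>" using phi(1) holomorphic_on_imp_continuous_on by blast
  have contr: "continuous_on {0..R} (\<lambda>r. H r \<theta>)" for \<theta>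
  proof -
    have "continuous_on {0..R} (\<lambda>r. \<phi> (z0 + complex_of_real r * exp (\<i> * complex_of_real \<theta>)))"
      by (rule continuous_on_compose2[OF cphi]) (auto intro!: continuous_intros inB)
    then show ?thesis unfolding H_def by (intro continuous_intros)
  qed
  have contth: "continuous_on UNIV (\<lambda>\<theta>. H r \<theta>)" if "r \<in> {0..R}" for r
  proof -
    have "continuous_on UNIV (\<lambda>\<theta>. \<phi> (z0 + complex_of_real r * exp (\<i> * complex_of_real \<theta>)))"
      by (rule continuous_on_compose2[OF cphi]) (auto intro!: continuous_intros inB[OF that])
    then show ?thesis unfolding H_def by (intro continuous_intros)
  qed
  have zero_iff: "H r \<theta> = 0 \<longleftrightarrow> (\<exists>m. \<theta> = f m r)" if "r \<in> {0..R}" for r \<theta>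
  proof -
    have "g r \<theta> = 0 \<longleftrightarrow> (\<exists>m. \<theta> = f m r)" using f_zeros that unfolding g_def by blast
    then show ?thesis using gH[OF that, of \<theta>] by simp
  qed
  have tnz: "H r (t k) \<noteq> 0" if rr: "r \<in> {0..R}" for r k
  proof
    assume "H r (t k) = 0"
    then obtain m where m: "t k = f m r" using zero_iff[OF rr] by auto
    show False
    proof (cases "m < k")
      case True then show False using above[OF rr True] m by simp
    next
      case False then show False using below[OF rr, of k m] m by simp
    qed
  qed
  have H0t: "H 0 (t k) < 0 \<longleftrightarrow> even k" for k
  proof -
    have e: "Arg p0 + real \<mu> * t k = pi * of_int k"
      using mupos by (simp add: t_def a_def c_def field_simps)
    have "H 0 (t k) = - cmod p0 * cos (Arg p0 + real \<mu> * t k)"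
      using gH[of 0 "t k"] R(1) by (simp add: g_def rescaled_re_def)
    also have "\<dots> = - cmod p0 * (if even k then 1 else -1)" by (simp only: e cos_npi_int)
    finally show ?thesis using p0 by auto
  qed
  have tsign: "H r (t k) < 0 \<longleftrightarrow> even k" if "r \<in> {0..R}" for r k
  proof -
    have "H 0 (t k) < 0 \<longleftrightarrow> H r (t k) < 0"
    proof (rule sign_const_lemma[where h = "\<lambda>s. H s (t k)"])
      show "continuous_on {0..r} (\<lambda>s. H s (t k))" using that by (auto intro: continuous_on_subset[OF contr])
      show "0 \<le> r" using that by simp
      show "\<forall>s\<in>{0..r}. H s (t k) \<noteq> 0"
      proof
        fix s assume "s \<in> {0..r}"
        then have "s \<in> {0..R}" using that by auto
        then show "H s (t k) \<noteq> 0" by (rule tnz)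
      qed
    qed
    then show ?thesis using H0t by simp
  qed
  have insign: "H r x < 0 \<longleftrightarrow> H r y < 0"
    if r: "r \<in> {0..R}" and x: "f (k-1) r < x" "x < f k r" and y: "f (k-1) r < y" "y < f k r" and xy: "x \<le> y"
    for r x y k
  proof (rule sign_const_lemma[where h = "\<lambda>s. H r s"])
    show "continuous_on {x..y} (H r)" using continuous_on_subset[OF contth[OF r]] by auto
    show "x \<le> y" by fact
    show "\<forall>s\<in>{x..y}. H r s \<noteq> 0"
    proof
      fix s assume s: "s \<in> {x..y}"
      show "H r s \<noteq> 0"
      proof
        assume "H r s = 0"
        then obtain m where m: "s = f m r" using zero_iff[OF r] by auto
        have "f (k-1) r < f m r" "f m r < f k r" using s x y m by auto
        then have "k - 1 < m" "m < k" using mono_rev[OF r] by auto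
        then show False by simp
      qed
    qed
  qed
  have tin: "f (k-1) r < t k" "t k < f k r" if "r \<in> {0..R}" for r k
    using above[OF that, of "k-1" k] below[OF that, of k k] by auto
  have thsign: "H r \<theta> < 0 \<longleftrightarrow> even k" if r: "r \<in> {0..R}" and th: "f (k-1) r < \<theta>" "\<theta> < f k r" for r \<theta> k
  proof (cases "\<theta> \<le> t k")
    case True
    then show ?thesis using insign[OF r th tin[OF r] True] tsign[OF r] by simp
  next
    case False
    then show ?thesis using insign[OF r tin[OF r] th] tsign[OF r] by simp
  qed
  have ReH: "Re (p (z0 + complex_of_real r * exp (\<i> * complex_of_real \<theta>)) - p z0) < 0 \<longleftrightarrow> H r \<theta> < 0"
    if "r \<in> {0<..R}" for r \<theta>
  proof -
    have r: "r \<in> {0..R}" "r > 0" using that by auto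
    have "g r \<theta> = Re (p (z0 + complex_of_real r * exp (\<i> * complex_of_real \<theta>)) - p z0) / r ^ \<mu>"
      using r by (simp add: g_def rescaled_re_def)
    then show ?thesis using gH[OF r(1), of \<theta>] r(2) by (simp add: divide_less_0_iff)
  qed
  have thl: "- Arg p0 / real \<mu> + 2 * pi * real_of_int l / real \<mu> = t (2*l)" for l
    by (simp add: t_def a_def c_def)
  have P1: "\<forall>l::int. \<forall>r\<in>{0..R}.
            f (2*l - 1) r < - Arg p0 / real \<mu> + 2 * pi * real_of_int l / real \<mu> \<and>
            - Arg p0 / real \<mu> + 2 * pi * real_of_int l / real \<mu> < f (2*l) r"
    using tin by (simp only: thl) blast
  have P2: "\<forall>l::int. \<forall>r\<in>{0<..R}.
            Re (p (z0 + complex_of_real r * exp (\<i> * complex_of_real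
                  (- Arg p0 / real \<mu> + 2 * pi * real_of_int l / real \<mu>))) - p z0) < 0"
  proof (intro allI ballI)
    fix l r assume r: "r \<in> {0<..R}"
    then have r1: "r \<in> {0..R}" by auto
    have "H r (t (2*l)) < 0" using tsign[OF r1, of "2*l"] by simp
    then show "Re (p (z0 + complex_of_real r * exp (\<i> * complex_of_real
                  (- Arg p0 / real \<mu> + 2 * pi * real_of_int l / real \<mu>))) - p z0) < 0"
      unfolding thl ReH[OF r] by simp
  qed
  have P3: "\<forall>r\<in>{0<..R}. \<forall>\<theta>::real.
            Re (p (z0 + complex_of_real r * exp (\<i> * complex_of_real \<theta>)) - p z0) < 0
            \<longleftrightarrow> (\<exists>l::int. f (2*l - 1) r < \<theta> \<and> \<theta> < f (2*l) r)"
  proof (intro ballI allI)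
    fix r \<theta> assume r0: "r \<in> {0<..R}"
    then have r: "r \<in> {0..R}" by auto
    have key: "H r \<theta> < 0 \<longleftrightarrow> (\<exists>l::int. f (2*l - 1) r < \<theta> \<and> \<theta> < f (2*l) r)"
      if th: "f (k-1) r < \<theta>" "\<theta> < f k r" for k
    proof -
      have "(\<exists>l::int. f (2*l - 1) r < \<theta> \<and> \<theta> < f (2*l) r) \<longleftrightarrow> even k"
      proof
        assume "\<exists>l::int. f (2*l - 1) r < \<theta> \<and> \<theta> < f (2*l) r"
        then obtain l where l: "f (2*l - 1) r < \<theta>" "\<theta> < f (2*l) r" by blast
        have "2*l - 1 < k" "k - 1 < 2*l" using mono_rev[OF r] l th by fastforce+
        then have "k = 2*l" by simp
        then show "even k" by simp
      next
        assume "even k"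
        then obtain l where "k = 2*l" by (auto elim: evenE)
        then show "\<exists>l::int. f (2*l - 1) r < \<theta> \<and> \<theta> < f (2*l) r" using th by blast
      qed
      then show ?thesis using thsign[OF r th] by simp
    qed
    define j where "j = \<lfloor>(\<theta> - a) / c\<rfloor>"
    have "real_of_int j \<le> (\<theta> - a) / c" "(\<theta> - a) / c < real_of_int j + 1"
      unfolding j_def by linarith+
    then have "c * real_of_int j \<le> \<theta> - a" "\<theta> - a < c * (real_of_int j + 1)"
      using cpos by (simp_all add: field_simps)
    then have tj: "t j \<le> \<theta>" "\<theta> < t (j+1)" by (simp_all add: t_def algebra_simps)
    have lo: "f (j-1) r < \<theta>" using tin(1)[OF r, of j] tj by simp
    have hi: "\<theta> < f (j+1) r" using tin(2)[OF r, of "j+1"] tj by simp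
    have "H r \<theta> < 0 \<longleftrightarrow> (\<exists>l::int. f (2*l - 1) r < \<theta> \<and> \<theta> < f (2*l) r)"
    proof (cases "\<theta> < f j r")
      case True then show ?thesis using key[OF lo True] by simp
    next
      case False
      show ?thesis
      proof (cases "\<theta> = f j r")
        case True
        then have "H r \<theta> = 0" using zero_iff[OF r] by auto
        moreover have "\<not> (f (2*l - 1) r < \<theta> \<and> \<theta> < f (2*l) r)" for l
        proof
          assume "f (2*l - 1) r < \<theta> \<and> \<theta> < f (2*l) r"
          then have "2*l - 1 < j" "j < 2*l" using mono_rev[OF r] True by auto
          then show False by simp
        qed
        ultimately show ?thesis by auto
      next
        case False2: False
        then have "f (j+1-1) r < \<theta>" using False by simp
        then show ?thesis using key[OF _ hi] by blast
      qed
    qed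
    then show "Re (p (z0 + complex_of_real r * exp (\<i> * complex_of_real \<theta>)) - p z0) < 0
            \<longleftrightarrow> (\<exists>l::int. f (2*l - 1) r < \<theta> \<and> \<theta> < f (2*l) r)"
      using ReH[OF r0] by simp
  qed
  show ?thesis using P1 P2 P3 by blast
qed
end
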